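(* Let $\alpha\in[0,1)$, $K_\alpha(x,y)=\dfrac{1}{x^2+2\cos(\pi\alpha)xy+y^2}$ and $Q_\alpha(x,y)=y+x\cos(\pi\alpha)$ for $x,y>0$. For integers $p\ge0$ define $$T_{\alpha,2p}=(2p)!\sum_{k=0}^p(-1)^{p-k}\binom{p+k}{p-k}(4Q_\alpha^2)^kK_\alpha^{p+k+1},\qquad T_{\alpha,2p+1}=2(2p+1)!\,Q_\alpha\sum_{k=0}^p(-1)^{p+1-k}\binom{p+1+k}{p-k}(4Q_\alpha^2)^kK_\alpha^{p+k+2}.$$ Then for every $n\ge0$, $\dfrac{\partial^nK_\alpha}{\partial y^n}=T_{\alpha,n}$. *)

theory Defs
  imports "HOL-Analysis.Analysis"
begin

definition K :: "real \<Rightarrow> real \<Rightarrow> real \<Rightarrow> real" where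
  "K \<alpha> x y = 1 / (x^2 + 2 * cos (pi * \<alpha>) * x * y + y^2)"

definition Q :: "real \<Rightarrow> real \<Rightarrow> real \<Rightarrow> real" where
  "Q \<alpha> x y = y + x * cos (pi * \<alpha>)"

definition T :: "real \<Rightarrow> nat \<Rightarrow> real \<Rightarrow> real \<Rightarrow> real" where
  "T \<alpha> n x y =
    (if even n then
       (let p = n div 2 in
        fact (2*p) * (\<Sum>k=0..p. (-1)^(p-k) * real ((p+k) choose (p-k))
            * (4 * (Q \<alpha> x y)^2)^k * (K \<alpha> x y)^(p+k+1)))
     else
       (let p = n div 2 in
        2 * fact (2*p+1) * Q \<alpha> x y * (\<Sum>k=0..p. (-1)^(p+1-k) * real ((p+1+k) choose (p-k))
            * (4 * (Q \<alpha> x y)^2)^k * (K \<alpha> x y)^(p+k+2))))"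

end

theory Submission imports Defs begin

lemma La: "(k+1) * (n choose (k+1)) = (n - k) * (n choose k)"
  using binomial_absorb_comp binomial_absorption by auto
lemma Lb: "n * ((n-1) choose r) = (n - r) * (n choose r)"
  using binomial_absorb_comp by simp

lemma comb1_aux: "(m+1)*B = (2*j+2)*(A::nat) \<Longrightarrow> N*C = (2*j+1)*B \<Longrightarrow> 4*(j+1)*A + N*C = (2*j+2*m+3)*B"
proof -
  assume a: "(m+1)*B = (2*j+2)*(A::nat)" and b: "N*C = (2*j+1)*B"
  have "4*(j+1)*A = 2*((2*j+2)*A)" by (simp add: algebra_simps)
  also have "\<dots> = 2*(m+1)*B" using a by simp
  finally have "4*(j+1)*A = 2*(m+1)*B" .
  then show ?thesis using b by (simp add: algebra_simps)
qed

lemma comb1: "4*(j+1)*((2*j+2+m) choose m) + (2*j+2+m)*((2*j+1+m) choose (m+1)) = (2*j+2*m+3)*((2*j+2+m) choose (m+1))"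
proof (rule comb1_aux)
  show "(m+1)*((2*j+2+m) choose (m+1)) = (2*j+2)*((2*j+2+m) choose m)"
    using La[of m "2*j+2+m"] by simp
  show "(2*j+2+m)*((2*j+1+m) choose (m+1)) = (2*j+1)*((2*j+2+m) choose (m+1))"
    using Lb[of "2*j+2+m" "m+1"] by simp
qed

lemma comb2_aux: "(r+1)*B = (2*j+1)*(A::nat) \<Longrightarrow> N*C = (2*j)*B \<Longrightarrow> 2*(2*j+1)*A + N*C = (2*j+2*r+2)*B"
proof -
  assume a: "(r+1)*B = (2*j+1)*(A::nat)" and b: "N*C = (2*j)*B"
  have "2*(2*j+1)*A = 2*((2*j+1)*A)" by (simp add: algebra_simps)
  also have "\<dots> = 2*(r+1)*B" using a by simp
  finally have "2*(2*j+1)*A = 2*(r+1)*B" .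
  then show ?thesis using b by (simp add: algebra_simps)
qed

lemma comb2s: "2*(2*j+1)*((2*j+r+1) choose r) + (2*j+r+1)*((2*j+r) choose (r+1)) = (2*j+2*r+2)*((2*j+r+1) choose (r+1))"
proof (rule comb2_aux)
  show "(r+1)*((2*j+r+1) choose (r+1)) = (2*j+1)*((2*j+r+1) choose r)"
    using La[of r "2*j+r+1"] by simp
  show "(2*j+r+1)*((2*j+r) choose (r+1)) = (2*j)*((2*j+r+1) choose (r+1))"
    using Lb[of "2*j+r+1" "r+1"] by simp
qed


definition aa :: "nat \<Rightarrow> nat \<Rightarrow> real" where
  "aa p k = (-1)^(p-k) * real ((p+k) choose (p-k))"
definition bb :: "nat \<Rightarrow> nat \<Rightarrow> real" where
  "bb p k = (-1)^(p+1-k) * real ((p+1+k) choose (p-k))"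

lemma term_even: "j < p \<Longrightarrow> 4*real(j+1)*aa p (j+1) - real(p+j+1)*aa p j = real(2*p+1)*bb p j"
proof -
  assume "j < p"
  then obtain m where m: "p = j+1+m" using less_imp_Suc_add by fastforce
  have c: "real (4*(j+1)*((2*j+2+m) choose m) + (2*j+2+m)*((2*j+1+m) choose (m+1))) = real ((2*j+2*m+3)*((2*j+2+m) choose (m+1)))"
    by (rule arg_cong[where f=real, OF comb1])
  have e: "p - (j+1) = m" "p+(j+1) = 2*j+2+m" "p - j = m+1" "p+j = 2*j+1+m" "p+1-j = m+2" "p+1+j = 2*j+2+m"
     "p+j+1 = 2*j+2+m" "2*p+1 = 2*j+2*m+3" using m by auto
  have "4*real(j+1)*aa p (j+1) - real(p+j+1)*aa p j = (-1)^m * real (4*(j+1)*((2*j+2+m) choose m) + (2*j+2+m)*((2*j+1+m) choose (m+1)))"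
    unfolding aa_def e by (simp add: algebra_simps power_add)
  also have "\<dots> = real(2*p+1)*bb p j"
    unfolding c bb_def e by (simp add: algebra_simps power_add)
  finally show ?thesis .
qed

lemma term_odd: "j \<le> p \<Longrightarrow> 2*(2*real j+1)*bb p j - real(p+j+1)*bb p (j-1) = real(2*p+2)*aa (p+1) j"
  if "1 \<le> j"
proof -
  assume j: "j \<le> p"
  then obtain r where r: "p = j+r" using le_Suc_ex by blast
  have c: "real (2*(2*j+1)*((2*j+r+1) choose r) + (2*j+r+1)*((2*j+r) choose (r+1))) = real ((2*j+2*r+2)*((2*j+r+1) choose (r+1)))"
    by (rule arg_cong[where f=real, OF comb2s])
  have e: "p+1-j = r+1" "p+1+(j-1) = 2*j+r" "p-(j-1) = r+1" "p+1-(j-1) = r+2" "p-j = r" "p+1+j = 2*j+r+1"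
     "p+j+1 = 2*j+r+1" "2*p+2 = 2*j+2*r+2"
    using r that by auto
  have "2*(2*real j+1)*bb p j - real(p+j+1)*bb p (j-1) = (-1)^(r+1) * real (2*(2*j+1)*((2*j+r+1) choose r) + (2*j+r+1)*((2*j+r) choose (r+1)))"
    unfolding bb_def e by (simp add: algebra_simps power_add)
  also have "\<dots> = real(2*p+2)*aa (p+1) j"
    unfolding c aa_def e by (simp add: algebra_simps power_add)
  finally show ?thesis .
qed


lemma aa_pp[simp]: "aa p p = 1" by (simp add: aa_def)
lemma bb_pp[simp]: "bb p p = -1" by (simp add: bb_def)

lemma even_sum:
  fixes q w :: real
  shows "fact(2*p) * (\<Sum>k=0..p. aa p k * (2*q*(4*real k*(4*q^2)^(k-1)*w^(Suc(p+k)) - real(Suc(p+k))*(4*q^2)^k*w^(Suc(p+k)+1))))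
     = 2*fact(2*p+1)*q*(\<Sum>k=0..p. bb p k * (4*q^2)^k * w^(p+k+2))"
proof -
  define X where "X j = (4*q^2)^j * w^(p+j+2)" for j
  have I: "{0..p} = {..<Suc p}" by auto
  have s1: "(\<Sum>k=0..p. aa p k * (4*real k*(4*q^2)^(k-1)*w^(Suc(p+k)))) = (\<Sum>j<p. 4*real(j+1)*aa p (j+1) * X j)"
    unfolding I sum.lessThan_Suc_shift by (simp add: X_def algebra_simps)
  have s2: "(\<Sum>k=0..p. aa p k * (real(Suc(p+k))*(4*q^2)^k*w^(Suc(p+k)+1))) = (\<Sum>j<p. real(p+j+1)*aa p j * X j) + real(2*p+1) * X p"
    unfolding I sum.lessThan_Suc by (simp add: X_def algebra_simps)
  have s3: "(\<Sum>k=0..p. bb p k * (4*q^2)^k * w^(p+k+2)) = (\<Sum>j<p. bb p j * X j) - X p"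
    unfolding I sum.lessThan_Suc by (simp add: X_def algebra_simps)
  have d: "(\<Sum>k=0..p. aa p k * (2*q*(4*real k*(4*q^2)^(k-1)*w^(Suc(p+k)) - real(Suc(p+k))*(4*q^2)^k*w^(Suc(p+k)+1))))
     = (\<Sum>k=0..p. 2*q*(aa p k * (4*real k*(4*q^2)^(k-1)*w^(Suc(p+k)))) - 2*q*(aa p k * (real(Suc(p+k))*(4*q^2)^k*w^(Suc(p+k)+1))))"
    by (rule sum.cong) (simp_all add: algebra_simps)
  also have "\<dots> = 2*q*(\<Sum>k=0..p. (aa p k * (4*real k*(4*q^2)^(k-1)*w^(Suc(p+k))))) - 2*q*(\<Sum>k=0..p. aa p k * (real(Suc(p+k))*(4*q^2)^k*w^(Suc(p+k)+1)))"
    by (simp only: sum_subtractf sum_distrib_left)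
  also have "\<dots> = 2*q*((\<Sum>j<p. 4*real(j+1)*aa p (j+1) * X j) - (\<Sum>j<p. real(p+j+1)*aa p j * X j)) - 2*q*real(2*p+1) * X p"
    unfolding s1 s2 by (simp add: algebra_simps)
  also have "(\<Sum>j<p. 4*real(j+1)*aa p (j+1) * X j) - (\<Sum>j<p. real(p+j+1)*aa p j * X j) = (\<Sum>j<p. real(2*p+1) * (bb p j * X j))"
    unfolding sum_subtractf[symmetric]
  proof (rule sum.cong)
    fix j assume "j \<in> {..<p}"
    then have "4*real(j+1)*aa p (j+1) - real(p+j+1)*aa p j = real(2*p+1)*bb p j" using term_even by simp
    then show "4*real(j+1)*aa p (j+1) * X j - real(p+j+1)*aa p j * X j = real(2*p+1) * (bb p j * X j)"
      by (metis left_diff_distrib mult.assoc)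
  qed simp
  also have "2*q*(\<Sum>j<p. real(2*p+1) * (bb p j * X j)) - 2*q*real(2*p+1) * X p = 2*q*real(2*p+1)*(\<Sum>k=0..p. bb p k * (4*q^2)^k * w^(p+k+2))"
    unfolding s3 by (simp add: algebra_simps sum_distrib_left sum.distrib)
  finally have "(\<Sum>k=0..p. aa p k * (2*q*(4*real k*(4*q^2)^(k-1)*w^(Suc(p+k)) - real(Suc(p+k))*(4*q^2)^k*w^(Suc(p+k)+1))))
     = 2*q*real(2*p+1)*(\<Sum>k=0..p. bb p k * (4*q^2)^k * w^(p+k+2))" .
  moreover have "fact(2*p+1) = real(2*p+1) * (fact(2*p)::real)" by simp
  ultimately show ?thesis by (simp add: algebra_simps)
qed


lemma odd_sum:
  fixes q w :: real
  shows "2*fact(2*p+1) * (\<Sum>k=0..p. bb p k * ((1+2*real k)*(4*q^2)^k*w^(Suc(p+k+1)) - (real(Suc(p+k+1))/2)*(4*q^2)^(k+1)*w^(Suc(p+k+1)+1)))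
     = fact(2*(p+1)) * (\<Sum>k=0..p+1. aa (p+1) k * (4*q^2)^k * w^((p+1)+k+1))"
proof -
  define Y where "Y j = (4*q^2)^j * w^(p+j+2)" for j
  have I: "{0..p} = {..<Suc p}" "{0..p+1} = {..<Suc (Suc p)}" by auto
  have A: "(\<Sum>k=0..p. bb p k * ((1+2*real k)*(4*q^2)^k*w^(Suc(p+k+1)))) = bb p 0 * Y 0 + (\<Sum>k<p. (2*real (k+1)+1) * bb p (k+1) * Y (k+1))"
    unfolding I sum.lessThan_Suc_shift by (simp add: Y_def algebra_simps)
  have B: "(\<Sum>k=0..p. bb p k * ((real(Suc(p+k+1))/2)*(4*q^2)^(k+1)*w^(Suc(p+k+1)+1))) = (\<Sum>k<p. (real(p+(k+1)+1)/2) * bb p ((k+1)-1) * Y (k+1)) - real(p+1) * Y (p+1)"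
    unfolding I sum.lessThan_Suc by (simp add: Y_def algebra_simps; simp add: field_simps)
  have R: "(\<Sum>k=0..p+1. aa (p+1) k * (4*q^2)^k * w^((p+1)+k+1)) = aa (p+1) 0 * Y 0 + (\<Sum>k<p. aa (p+1) (k+1) * Y (k+1)) + Y (p+1)"
    by (simp only: I(2) sum.lessThan_Suc_shift[where n="Suc p"] sum.lessThan_Suc[where n=p]) (simp add: Y_def algebra_simps)
  have b0: "2 * bb p 0 = real(2*p+2) * aa (p+1) 0" by (simp add: aa_def bb_def)
  have d: "(\<Sum>k=0..p. bb p k * ((1+2*real k)*(4*q^2)^k*w^(Suc(p+k+1)) - (real(Suc(p+k+1))/2)*(4*q^2)^(k+1)*w^(Suc(p+k+1)+1)))
     = (\<Sum>k=0..p. bb p k * ((1+2*real k)*(4*q^2)^k*w^(Suc(p+k+1)))) - (\<Sum>k=0..p. bb p k * ((real(Suc(p+k+1))/2)*(4*q^2)^(k+1)*w^(Suc(p+k+1)+1)))"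
    by (simp only: right_diff_distrib sum_subtractf)
  have m: "2*(\<Sum>k<p. (2*real (k+1)+1) * bb p (k+1) * Y (k+1)) - 2*(\<Sum>k<p. (real(p+(k+1)+1)/2) * bb p ((k+1)-1) * Y (k+1))
     = real(2*p+2) * (\<Sum>k<p. aa (p+1) (k+1) * Y (k+1))"
    unfolding sum_distrib_left sum_subtractf[symmetric]
  proof (rule sum.cong)
    fix k assume "k \<in> {..<p}"
    then have "2*(2*real (k+1)+1)*bb p (k+1) - real(p+(k+1)+1)*bb p ((k+1)-1) = real(2*p+2)*aa (p+1) (k+1)"
      by (intro term_odd) auto
    moreover have "2*((2*real (k+1)+1) * bb p (k+1) * Y (k+1)) - 2*((real(p+(k+1)+1)/2) * bb p ((k+1)-1) * Y (k+1)) = (2*(2*real (k+1)+1)*bb p (k+1) - real(p+(k+1)+1)*bb p ((k+1)-1)) * Y (k+1)"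
      by (simp add: field_simps)
    ultimately show "2*((2*real (k+1)+1) * bb p (k+1) * Y (k+1)) - 2*((real(p+(k+1)+1)/2) * bb p ((k+1)-1) * Y (k+1)) = real(2*p+2) * (aa (p+1) (k+1) * Y (k+1))"
      by simp
  qed simp
  have "2 * (\<Sum>k=0..p. bb p k * ((1+2*real k)*(4*q^2)^k*w^(Suc(p+k+1)) - (real(Suc(p+k+1))/2)*(4*q^2)^(k+1)*w^(Suc(p+k+1)+1)))
     = real(2*p+2) * (\<Sum>k=0..p+1. aa (p+1) k * (4*q^2)^k * w^((p+1)+k+1))"
  (is "2 * ?S = _ * ?R")
  proof -
    have "2 * (\<Sum>k=0..p. bb p k * ((1+2*real k)*(4*q^2)^k*w^(Suc(p+k+1)) - (real(Suc(p+k+1))/2)*(4*q^2)^(k+1)*w^(Suc(p+k+1)+1)))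
      = 2*((bb p 0 * Y 0 + (\<Sum>k<p. (2*real (k+1)+1) * bb p (k+1) * Y (k+1))) - ((\<Sum>k<p. (real(p+(k+1)+1)/2) * bb p ((k+1)-1) * Y (k+1)) - real(p+1) * Y (p+1)))"
      by (simp only: d A B)
    also have "\<dots> = real(2*p+2) * (aa (p+1) 0 * Y 0 + (\<Sum>k<p. aa (p+1) (k+1) * Y (k+1)) + Y (p+1))"
      using m b0 by (simp add: algebra_simps)
    also have "\<dots> = real(2*p+2) * (\<Sum>k=0..p+1. aa (p+1) k * (4*q^2)^k * w^((p+1)+k+1))"
      by (simp only: R)
    finally show ?thesis .
  qed
  note h1 = this
  have h2: "fact(2*(p+1)) = real(2*p+2) * (fact(2*p+1)::real)"
  proof -
    have e: "2*(p+1) = Suc (2*p+1)" by simp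
    show ?thesis by (simp only: e fact_Suc) simp
  qed
  have "2*fact(2*p+1) * ?S = fact(2*p+1) * (2 * ?S)" by (simp only: mult_ac)
  also have "\<dots> = fact(2*p+1) * (real(2*p+2) * ?R)" by (simp only: h1)
  also have "\<dots> = fact(2*(p+1)) * ?R" unfolding h2 by (simp only: ac_simps)
  finally show ?thesis .
qed

lemma dE:
  fixes q w :: "real \<Rightarrow> real"
  assumes q: "(q has_real_derivative 1) (at t)" and w: "(w has_real_derivative (-2*q t*w t^2)) (at t)"
  shows "((\<lambda>t. (4*q t^2)^k * w t^(Suc n)) has_real_derivative
     (2*q t*(4*real k*(4*q t^2)^(k-1)*w t^(Suc n) - real (Suc n)*(4*q t^2)^k*w t^(Suc n+1)))) (at t)"
proof -
  have "((\<lambda>t. (4*q t^2)^k * w t^(Suc n)) has_real_derivative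
     (real k * ((4 * (real 2 * (1 * q t ^ (2 - Suc 0)))) * (4*q t^2)^(k - Suc 0))) * w t^(Suc n) + 
      (real (Suc n) * ((-2*q t*w t^2) * w t^(Suc n - Suc 0))) * (4*q t^2)^k) (at t)"
    by (intro DERIV_mult DERIV_power DERIV_cmult q w)
  then show ?thesis
    by (rule DERIV_cong) (simp add: algebra_simps power2_eq_square)
qed

lemma dO:
  fixes q w :: "real \<Rightarrow> real"
  assumes q: "(q has_real_derivative 1) (at t)" and w: "(w has_real_derivative (-2*q t*w t^2)) (at t)"
  shows "((\<lambda>t. q t * (4*q t^2)^k * w t^(Suc n)) has_real_derivative
     ((1+2*real k)*(4*q t^2)^k*w t^(Suc n) - (real (Suc n)/2)*(4*q t^2)^(k+1)*w t^(Suc n+1))) (at t)"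
proof -
  have "((\<lambda>t. q t * (4*q t^2)^k * w t^(Suc n)) has_real_derivative
     (1 * (4*q t^2)^k + (real k * ((4 * (real 2 * (1 * q t ^ (2 - Suc 0)))) * (4*q t^2)^(k - Suc 0))) * q t) * w t^(Suc n) + 
      (real (Suc n) * ((-2*q t*w t^2) * w t^(Suc n - Suc 0))) * (q t * (4*q t^2)^k)) (at t)"
    by (intro DERIV_mult DERIV_power DERIV_cmult q w)
  then show ?thesis
  proof (rule DERIV_cong)
    have e: "real k * (4*q t^2)^(k - Suc 0) * (4 * q t^2) = real k * (4*q t^2)^k"
      by (cases k) (simp_all add: algebra_simps)
    show "(1 * (4*q t^2)^k + (real k * ((4 * (real 2 * (1 * q t ^ (2 - Suc 0)))) * (4*q t^2)^(k - Suc 0))) * q t) * w t^(Suc n) + 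
      (real (Suc n) * ((-2*q t*w t^2) * w t^(Suc n - Suc 0))) * (q t * (4*q t^2)^k) =
      (1+2*real k)*(4*q t^2)^k*w t^(Suc n) - (real (Suc n)/2)*(4*q t^2)^(k+1)*w t^(Suc n+1)"
      by (cases k) (simp_all add: algebra_simps power2_eq_square)
  qed
qed

lemma cos_gt: assumes "0 \<le> a" "a < 1" shows "cos (pi*a) > -1"
proof -
  have "cos pi < cos (pi*a)" using assms by (intro cos_monotone_0_pi) auto
  then show ?thesis by simp
qed

lemma D_pos: assumes "c > -1" "x > 0" "t > (0::real)" shows "x^2 + 2*c*x*t + t^2 > 0"
proof -
  have e: "x^2 + 2*c*x*t + t^2 = (x-t)^2 + 2*((c+1)*(x*t))" by (simp add: algebra_simps power2_eq_square)
  have "(c+1)*(x*t) > 0" using assms by simp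
  moreover have "(x-t)^2 \<ge> 0" by simp
  ultimately show ?thesis unfolding e by linarith
qed

lemma T_even: "T \<alpha> (2*p) x = (\<lambda>t. fact(2*p) * (\<Sum>k=0..p. aa p k * ((4*(Q \<alpha> x t)^2)^k * (K \<alpha> x t)^(Suc(p+k)))))"
  by (rule ext) (simp add: T_def aa_def Let_def mult.assoc)

lemma T_odd: "T \<alpha> (2*p+1) x = (\<lambda>t. 2*fact(2*p+1) * (\<Sum>k=0..p. bb p k * (Q \<alpha> x t * (4*(Q \<alpha> x t)^2)^k * (K \<alpha> x t)^(Suc(p+k+1)))))"
  by (rule ext) (simp add: T_def bb_def Let_def sum_distrib_left algebra_simps)

lemma T_odd': "T \<alpha> (2*p+1) x t = 2*fact(2*p+1)*Q \<alpha> x t*(\<Sum>k=0..p. bb p k * (4*(Q \<alpha> x t)^2)^k * (K \<alpha> x t)^(p+k+2))"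
  by (simp add: T_def bb_def Let_def)

lemma T_even': "T \<alpha> (2*(p+1)) x t = fact(2*(p+1)) * (\<Sum>k=0..p+1. aa (p+1) k * (4*(Q \<alpha> x t)^2)^k * (K \<alpha> x t)^((p+1)+k+1))"
  unfolding T_def aa_def Let_def by (simp del: mult_Suc_right)

lemma Tder:
  assumes a: "0 \<le> \<alpha>" "\<alpha> < 1" and x: "x > 0" and t: "t > 0"
  shows "(T \<alpha> n x has_real_derivative T \<alpha> (Suc n) x t) (at t)"
proof -
  define c where "c = cos (pi*\<alpha>)"
  have c: "c > -1" unfolding c_def using cos_gt a by auto
  have Dp: "x^2 + 2*c*x*t + t^2 > 0" using D_pos c x t by auto
  have q: "((\<lambda>t. Q \<alpha> x t) has_real_derivative 1) (at t)"
    unfolding Q_def by (auto intro!: derivative_eq_intros)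
  have w: "((\<lambda>t. K \<alpha> x t) has_real_derivative (-2*Q \<alpha> x t*K \<alpha> x t^2)) (at t)"
  proof -
    have dK: "((\<lambda>t. inverse (x^2 + 2*c*x*t + t^2)) has_real_derivative
       -(inverse (x^2 + 2*c*x*t + t^2) * (0 + 2*c*x*1 + real 2 * (1 * t^(2 - Suc 0))) * inverse (x^2 + 2*c*x*t + t^2))) (at t)"
      using Dp by (intro DERIV_inverse' DERIV_add DERIV_cmult DERIV_const DERIV_power DERIV_ident) auto
    have Keq: "K \<alpha> x = (\<lambda>t. inverse (x^2 + 2*c*x*t + t^2))"
      by (simp add: K_def fun_eq_iff divide_inverse c_def)
    show ?thesis unfolding Q_def Keq c_def[symmetric]
      by (rule DERIV_cong[OF dK]) (simp add: power2_eq_square algebra_simps)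
  qed
  consider p where "n = 2*p" | p where "n = 2*p+1" by (metis oddE evenE)
  then show ?thesis
  proof cases
    case 1
    have der: "(T \<alpha> (2*p) x has_real_derivative fact(2*p) * (\<Sum>k=0..p. aa p k * (2*Q \<alpha> x t*(4*real k*(4*Q \<alpha> x t^2)^(k-1)*K \<alpha> x t^(Suc(p+k)) - real(Suc(p+k))*(4*Q \<alpha> x t^2)^k*K \<alpha> x t^(Suc(p+k)+1))))) (at t)"
      unfolding T_even by (intro DERIV_cmult DERIV_sum dE[OF q w])
    have e: "Suc n = 2*p+1" using 1 by simp
    show ?thesis unfolding e unfolding 1
      by (rule DERIV_cong[OF der]) (simp only: even_sum T_odd')
  next
    case 2
    have der: "(T \<alpha> (2*p+1) x has_real_derivative 2*fact(2*p+1) * (\<Sum>k=0..p. bb p k * ((1+2*real k)*(4*Q \<alpha> x t^2)^k*K \<alpha> x t^(Suc(p+k+1)) - (real(Suc(p+k+1))/2)*(4*Q \<alpha> x t^2)^(k+1)*K \<alpha> x t^(Suc(p+k+1)+1)))) (at t)"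
      unfolding T_odd by (intro DERIV_cmult DERIV_sum dO[OF q w])
    have e: "Suc n = 2*(p+1)" using 2 by simp
    show ?thesis unfolding e unfolding 2
      by (rule DERIV_cong[OF der]) (simp only: odd_sum T_even')
  qed
qed

theorem lemma1:
  fixes \<alpha> x y :: real and n :: nat
  assumes "0 \<le> \<alpha>" "\<alpha> < 1" "x > 0" "y > 0"
  shows "(deriv ^^ n) (\<lambda>t. K \<alpha> x t) y = T \<alpha> n x y"
proof -
  have "\<forall>t>0. (deriv ^^ n) (\<lambda>t. K \<alpha> x t) t = T \<alpha> n x t"
  proof (induction n)
    case 0
    then show ?case by (simp add: T_def)
  next
    case (Suc n)
    show ?case
    proof (intro allI impI)
      fix t :: real assume t: "t > 0"
      have ev: "eventually (\<lambda>s. (deriv ^^ n) (\<lambda>t. K \<alpha> x t) s = T \<alpha> n x s) (nhds t)"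
      proof -
        have "eventually (\<lambda>s. s \<in> {0<..}) (nhds t)" by (rule eventually_nhds_in_open) (auto simp: t)
        then show ?thesis by (rule eventually_mono) (use Suc.IH in auto)
      qed
      have "(deriv ^^ Suc n) (\<lambda>t. K \<alpha> x t) t = deriv ((deriv ^^ n) (\<lambda>t. K \<alpha> x t)) t" by simp
      also have "\<dots> = deriv (T \<alpha> n x) t" by (rule deriv_cong_ev[OF ev refl])
      also have "\<dots> = T \<alpha> (Suc n) x t" by (rule DERIV_imp_deriv[OF Tder[OF assms(1,2,3) t]])
      finally show "(deriv ^^ Suc n) (\<lambda>t. K \<alpha> x t) t = T \<alpha> (Suc n) x t" .
    qed
  qed
  then show ?thesis using assms(4) by simp
qed

end
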